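(* Let $\nu:S\setminus\{0\}\to C$ and $\nu':S\setminus\{0\}\to C'$ be injective (not necessarily well-ordered) valuations on a $\Bbbk$-vector space $S$, and suppose there is a basis $\mathbf B$ of $S$ adapted to both $\nu$ and $\nu'$. Then for every $a\in C_\nu:=\nu(S\setminus\{0\})$ the minimum $\min\{\nu'(x):x\in S\setminus\{0\},\ \nu(x)=a\}$ exists, and the assignment $a\mapsto$ this minimum defines a bijection $\mathbf K_{\nu',\nu}:C_\nu\to C_{\nu'}:=\nu'(S\setminus\{0\})$ such that $\nu'(b)=\mathbf K_{\nu',\nu}(\nu(b))$ for every basis $\mathbf B$ adapted to both valuations and every $b\in\mathbf B$.
   Context: A valuation on a $\Bbbk$-vector space $S$ with values in a totally ordered set $(C,\le)$ is a map $\nu:S\setminus\{0\}\to C$ such that $\nu(cx)=\nu(x)$ for all $c\in\Bbbk^\times$, $x\ne0$, and $\nu(x+y)\le\max(\nu(x),\nu(y))$ whenever $x,y,x+y\neq 0$. It is injective if there is a basis $\mathbf B$ of $S$ such that $\nu|_{\mathbf B}$ is injective; such a basis is called adapted to $\nu$. *)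

theory Defs
  imports Complex_Main
begin

text \<open>The vector space S is the whole type 'v, with scalar multiplication
  scale over a field 'k (assumed to satisfy the vector_space locale).  The value of nu at 0 is irrelevant.\<close>

definition valuation :: "('k::field \<Rightarrow> 'v::ab_group_add \<Rightarrow> 'v) \<Rightarrow> ('v \<Rightarrow> 'c::linorder) \<Rightarrow> bool" where
  "valuation scale \<nu> \<longleftrightarrow>
     (\<forall>c x. c \<noteq> 0 \<and> x \<noteq> 0 \<longrightarrow> \<nu> (scale c x) = \<nu> x) \<and>
     (\<forall>x y. x \<noteq> 0 \<and> y \<noteq> 0 \<and> x + y \<noteq> 0 \<longrightarrow> \<nu> (x + y) \<le> max (\<nu> x) (\<nu> y))"

definition is_basis :: "('k::field \<Rightarrow> 'v::ab_group_add \<Rightarrow> 'v) \<Rightarrow> 'v set \<Rightarrow> bool" where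
  "is_basis scale B \<longleftrightarrow> \<not> module.dependent scale B \<and> module.span scale B = UNIV"

definition adapted_basis :: "('k::field \<Rightarrow> 'v::ab_group_add \<Rightarrow> 'v) \<Rightarrow> ('v \<Rightarrow> 'c) \<Rightarrow> 'v set \<Rightarrow> bool" where
  "adapted_basis scale \<nu> B \<longleftrightarrow> is_basis scale B \<and> inj_on \<nu> B"

definition injective_valuation :: "('k::field \<Rightarrow> 'v::ab_group_add \<Rightarrow> 'v) \<Rightarrow> ('v \<Rightarrow> 'c::linorder) \<Rightarrow> bool" where
  "injective_valuation scale \<nu> \<longleftrightarrow> valuation scale \<nu> \<and> (\<exists>B. adapted_basis scale \<nu> B)"

end

theory Submission
  imports Defs
begin

context vector_space
begin

lemma val_neg:
  assumes "valuation scale \<nu>" "x \<noteq> 0"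
  shows "\<nu> (- x) = \<nu> x"
proof -
  have "- x = (-1) *s x" by simp
  with assms show ?thesis unfolding valuation_def by (metis neg_equal_0_iff_equal one_neq_zero)
qed

lemma val_max:
  assumes v: "valuation scale \<nu>" and u: "u \<noteq> 0" and w: "w \<noteq> 0" and ne: "\<nu> u \<noteq> \<nu> w"
  shows "u + w \<noteq> 0 \<and> \<nu> (u + w) = max (\<nu> u) (\<nu> w)"
proof -
  have s: "u + w \<noteq> 0"
  proof
    assume "u + w = 0"
    then have "u = - w" by (simp add: eq_neg_iff_add_eq_0)
    then show False using val_neg[OF v w] ne by simp
  qed
  have le: "\<nu> (u + w) \<le> max (\<nu> u) (\<nu> w)" using v u w s unfolding valuation_def by blast
  have g1: "\<nu> u \<le> max (\<nu> (u + w)) (\<nu> w)"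
  proof -
    have "u = (u + w) + (- w)" by simp
    then have "\<nu> u \<le> max (\<nu> (u + w)) (\<nu> (- w))"
      using v u w s unfolding valuation_def by (metis neg_equal_0_iff_equal)
    then show ?thesis using val_neg[OF v w] by simp
  qed
  have g2: "\<nu> w \<le> max (\<nu> (u + w)) (\<nu> u)"
  proof -
    have "w = (u + w) + (- u)" by simp
    then have "\<nu> w \<le> max (\<nu> (u + w)) (\<nu> (- u))"
      using v u w s unfolding valuation_def by (metis neg_equal_0_iff_equal)
    then show ?thesis using val_neg[OF v u] by simp
  qed
  show ?thesis using s le g1 g2 ne by (auto simp: max_def split: if_splits)
qed

lemma val_sum:
  assumes v: "valuation scale \<nu>" and fin: "finite F" and ne: "F \<noteq> {}"
    and sub: "F \<subseteq> B" and inj: "inj_on \<nu> B" and z: "0 \<notin> B" and c: "\<forall>b\<in>F. c b \<noteq> 0"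
  shows "(\<Sum>b\<in>F. c b *s b) \<noteq> 0 \<and> \<nu> (\<Sum>b\<in>F. c b *s b) = Max (\<nu> ` F)"
  using fin ne sub c
proof (induction F rule: finite_ne_induct)
  case (singleton x)
  then have "x \<noteq> 0" using z by auto
  then show ?case using singleton v unfolding valuation_def by auto
next
  case (insert x F)
  have x0: "x \<noteq> 0" using insert z by auto
  have u0: "c x *s x \<noteq> 0" using x0 insert by auto
  have nu: "\<nu> (c x *s x) = \<nu> x" using x0 insert v unfolding valuation_def by auto
  have IH: "(\<Sum>b\<in>F. c b *s b) \<noteq> 0" "\<nu> (\<Sum>b\<in>F. c b *s b) = Max (\<nu> ` F)"
    using insert by auto
  have "Max (\<nu> ` F) \<in> \<nu> ` F" using insert by auto
  then obtain y where y: "y \<in> F" "\<nu> y = Max (\<nu> ` F)" by auto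
  have "\<nu> x \<noteq> \<nu> y" using inj insert y by (metis inj_onD insert_subset subsetD)
  then have "\<nu> (c x *s x) \<noteq> \<nu> (\<Sum>b\<in>F. c b *s b)" using nu IH y by simp
  from val_max[OF v u0 IH(1) this] show ?case
    using insert nu IH by simp
qed

lemma val_rep:
  assumes v: "valuation scale \<nu>" and ind: "\<not> dependent B" and sp: "span B = UNIV"
    and inj: "inj_on \<nu> B" and x: "x \<noteq> 0"
  shows "finite {b. representation B x b \<noteq> 0} \<and> {b. representation B x b \<noteq> 0} \<noteq> {}
    \<and> {b. representation B x b \<noteq> 0} \<subseteq> B
    \<and> \<nu> x = Max (\<nu> ` {b. representation B x b \<noteq> 0})"
proof -
  let ?F = "{b. representation B x b \<noteq> 0}"
  have fin: "finite ?F" by (rule finite_representation)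
  have sub: "?F \<subseteq> B" using representation_ne_zero by auto
  have eq: "(\<Sum>b\<in>?F. representation B x b *s b) = x"
    using sum_nonzero_representation_eq[of B x] ind sp by auto
  have ne: "?F \<noteq> {}"
  proof
    assume "?F = {}"
    then have "(\<Sum>b\<in>?F. representation B x b *s b) = 0" by (simp only: sum.empty)
    then show False using eq x by argo
  qed
  have z: "0 \<notin> B" using ind dependent_zero by auto
  have "\<nu> (\<Sum>b\<in>?F. representation B x b *s b) = Max (\<nu> ` ?F)"
    using val_sum[OF v fin ne sub inj z] by auto
  then show ?thesis using fin ne sub eq by simp
qed

lemma key:
  fixes \<nu> :: "'b \<Rightarrow> 'c::linorder" and \<nu>' :: "'b \<Rightarrow> 'd::linorder"
  assumes v: "valuation scale \<nu>" and v': "valuation scale \<nu>'"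
    and ind: "\<not> dependent B" and sp: "span B = UNIV"
    and inj: "inj_on \<nu> B" and inj': "inj_on \<nu>' B" and b: "b \<in> B"
  shows "\<nu>' b \<in> {\<nu>' x | x. x \<noteq> 0 \<and> \<nu> x = \<nu> b}"
    and "\<forall>m' \<in> {\<nu>' x | x. x \<noteq> 0 \<and> \<nu> x = \<nu> b}. \<nu>' b \<le> m'"
proof -
  have b0: "b \<noteq> 0" using ind dependent_zero b by blast
  show "\<nu>' b \<in> {\<nu>' x | x. x \<noteq> 0 \<and> \<nu> x = \<nu> b}" using b0 by blast
  show "\<forall>m' \<in> {\<nu>' x | x. x \<noteq> 0 \<and> \<nu> x = \<nu> b}. \<nu>' b \<le> m'"
  proof
    fix m' assume "m' \<in> {\<nu>' x | x. x \<noteq> 0 \<and> \<nu> x = \<nu> b}"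
    then obtain x where x: "x \<noteq> 0" "\<nu> x = \<nu> b" "m' = \<nu>' x" by auto
    let ?F = "{b. representation B x b \<noteq> 0}"
    note R = val_rep[OF v ind sp inj x(1)]
    note R' = val_rep[OF v' ind sp inj' x(1)]
    have "Max (\<nu> ` ?F) \<in> \<nu> ` ?F" using R by auto
    then obtain b' where b'00: "Max (\<nu> ` ?F) = \<nu> b'" "b' \<in> ?F" by (rule imageE)
    have b'0: "b' \<in> ?F" "\<nu> b' = Max (\<nu> ` ?F)" using b'00 by simp_all
    have Rx: "\<nu> x = Max (\<nu> ` ?F)" using R by blast
    have "\<nu> b' = \<nu> x" using b'0(2) Rx by (rule trans[OF _ sym])
    have b'2: "\<nu> b' = \<nu> b" using \<open>\<nu> b' = \<nu> x\<close> x(2) by (rule trans)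
    note b' = b'0(1) b'2
    have "b' \<in> B" using b'(1) R by blast
    have "b' = b" using inj b'(2) \<open>b' \<in> B\<close> b by (rule inj_onD)
    then have "b \<in> ?F" using b' by simp
    have fin: "finite ?F" using R by blast
    have R'x: "\<nu>' x = Max (\<nu>' ` ?F)" using R' by blast
    have "\<nu>' b \<le> Max (\<nu>' ` ?F)" using fin \<open>b \<in> ?F\<close> by (intro Max_ge) auto
    then show "\<nu>' b \<le> m'" unfolding x(3) R'x .
  qed
qed

lemma key_least:
  fixes \<nu> :: "'b \<Rightarrow> 'c::linorder" and \<nu>' :: "'b \<Rightarrow> 'd::linorder"
  assumes v: "valuation scale \<nu>" and v': "valuation scale \<nu>'"
    and ind: "\<not> dependent B" and sp: "span B = UNIV"
    and inj: "inj_on \<nu> B" and inj': "inj_on \<nu>' B" and b: "b \<in> B"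
  shows "(LEAST m. m \<in> {\<nu>' x | x. x \<noteq> 0 \<and> \<nu> x = \<nu> b}) = \<nu>' b"
  using key[OF assms] by (intro Least_equality) auto

lemma image_eq:
  assumes v: "valuation scale \<nu>" and ind: "\<not> dependent B" and sp: "span B = UNIV"
    and inj: "inj_on \<nu> B"
  shows "\<nu> ` (UNIV - {0}) = \<nu> ` B"
proof
  show "\<nu> ` B \<subseteq> \<nu> ` (UNIV - {0})" using ind dependent_zero by auto
  show "\<nu> ` (UNIV - {0}) \<subseteq> \<nu> ` B"
  proof
    fix a assume "a \<in> \<nu> ` (UNIV - {0})"
    then obtain x where x: "x \<noteq> 0" "a = \<nu> x" by auto
    note R = val_rep[OF v ind sp inj x(1)]
    have "Max (\<nu> ` {b. representation B x b \<noteq> 0}) \<in> \<nu> ` {b. representation B x b \<noteq> 0}"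
      using R by auto
    then obtain b' where b'00: "Max (\<nu> ` {b. representation B x b \<noteq> 0}) = \<nu> b'"
      "b' \<in> {b. representation B x b \<noteq> 0}" by (rule imageE)
    have b'0: "b' \<in> {b. representation B x b \<noteq> 0}"
      "\<nu> b' = Max (\<nu> ` {b. representation B x b \<noteq> 0})" using b'00 by simp_all
    have "b' \<in> B" using b'0(1) R by blast
    have Rx: "\<nu> x = Max (\<nu> ` {b. representation B x b \<noteq> 0})" using R by blast
    have "a = \<nu> b'" using x(2) Rx b'00(1) by (rule trans[OF trans])
    then show "a \<in> \<nu> ` B" using \<open>b' \<in> B\<close> by (rule image_eqI)
  qed
qed

end

theorem mainTheorem5:
  fixes scale :: "'k::field \<Rightarrow> 'v::ab_group_add \<Rightarrow> 'v"
    and \<nu> :: "'v \<Rightarrow> 'c::linorder" and \<nu>' :: "'v \<Rightarrow> 'd::linorder"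
  assumes "vector_space scale"
    and "injective_valuation scale \<nu>"
    and "injective_valuation scale \<nu>'"
    and "\<exists>B. adapted_basis scale \<nu> B \<and> adapted_basis scale \<nu>' B"
  shows "(\<forall>a \<in> \<nu> ` (UNIV - {0}). \<exists>m \<in> {\<nu>' x | x. x \<noteq> 0 \<and> \<nu> x = a}.
            \<forall>m' \<in> {\<nu>' x | x. x \<noteq> 0 \<and> \<nu> x = a}. m \<le> m')
       \<and> (let K = (\<lambda>a. LEAST m. m \<in> {\<nu>' x | x. x \<noteq> 0 \<and> \<nu> x = a}) in
           bij_betw K (\<nu> ` (UNIV - {0})) (\<nu>' ` (UNIV - {0}))
           \<and> (\<forall>B. adapted_basis scale \<nu> B \<and> adapted_basis scale \<nu>' B \<longrightarrow>
                 (\<forall>b \<in> B. \<nu>' b = K (\<nu> b))))"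
proof -
  interpret vector_space scale by fact
  have v: "valuation scale \<nu>" and v': "valuation scale \<nu>'"
    using assms(2,3) unfolding injective_valuation_def by auto
  obtain B where B: "adapted_basis scale \<nu> B" "adapted_basis scale \<nu>' B" using assms(4) by auto
  have ind: "\<not> dependent B" and sp: "span B = UNIV" and inj: "inj_on \<nu> B" and inj': "inj_on \<nu>' B"
    using B unfolding adapted_basis_def is_basis_def by auto
  define K where "K = (\<lambda>a. LEAST m. m \<in> {\<nu>' x | x. x \<noteq> 0 \<and> \<nu> x = a})"
  have im: "\<nu> ` (UNIV - {0}) = \<nu> ` B" by (rule image_eq[OF v ind sp inj])
  have im': "\<nu>' ` (UNIV - {0}) = \<nu>' ` B" by (rule image_eq[OF v' ind sp inj'])
  have Kb: "K (\<nu> b) = \<nu>' b" if "b \<in> B" for b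
    unfolding K_def using key_least[OF v v' ind sp inj inj' that] .
  have P1: "\<forall>a \<in> \<nu> ` (UNIV - {0}). \<exists>m \<in> {\<nu>' x | x. x \<noteq> 0 \<and> \<nu> x = a}.
            \<forall>m' \<in> {\<nu>' x | x. x \<noteq> 0 \<and> \<nu> x = a}. m \<le> m'"
  proof
    fix a assume "a \<in> \<nu> ` (UNIV - {0})"
    then obtain b where b: "b \<in> B" "a = \<nu> b" using im by auto
    show "\<exists>m \<in> {\<nu>' x | x. x \<noteq> 0 \<and> \<nu> x = a}. \<forall>m' \<in> {\<nu>' x | x. x \<noteq> 0 \<and> \<nu> x = a}. m \<le> m'"
      using key[OF v v' ind sp inj inj' b(1)] b(2) by blast
  qed
  have P2: "bij_betw K (\<nu> ` (UNIV - {0})) (\<nu>' ` (UNIV - {0}))"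
    unfolding im im' bij_betw_def
  proof
    show "inj_on K (\<nu> ` B)"
    proof (rule inj_onI)
      fix a1 a2 assume "a1 \<in> \<nu> ` B" "a2 \<in> \<nu> ` B" "K a1 = K a2"
      then obtain b1 b2 where "b1 \<in> B" "b2 \<in> B" "a1 = \<nu> b1" "a2 = \<nu> b2" "\<nu>' b1 = \<nu>' b2"
        using Kb by auto
      then show "a1 = a2" using inj' by (metis inj_onD)
    qed
    show "K ` \<nu> ` B = \<nu>' ` B" using Kb by (force simp: image_iff)
  qed
  have P3: "\<forall>B. adapted_basis scale \<nu> B \<and> adapted_basis scale \<nu>' B \<longrightarrow> (\<forall>b \<in> B. \<nu>' b = K (\<nu> b))"
  proof (intro allI impI ballI)
    fix B' b assume B': "adapted_basis scale \<nu> B' \<and> adapted_basis scale \<nu>' B'" and b: "b \<in> B'"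
    have "\<not> dependent B'" "span B' = UNIV" "inj_on \<nu> B'" "inj_on \<nu>' B'"
      using B' unfolding adapted_basis_def is_basis_def by auto
    from key_least[OF v v' this b] show "\<nu>' b = K (\<nu> b)" unfolding K_def by simp
  qed
  show ?thesis using P1 P2 P3 unfolding K_def Let_def by simp
qed

end
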